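(* Let $G$ be a cactus whose cycles are $C^1_{n_1},\dots,C^m_{n_m}$, with $m\ge 1$ (here $C^i_{n_i}$ is a cycle with $n_i$ vertices). Then $$\mathrm{vol}(G)=\prod_{i=1}^m \mathrm{vol}(C^i_{n_i}).$$
   Context: A cactus is a connected finite simple graph in which every edge lies in at most one cycle. For a finite simple undirected graph $G=(V,E)$ with $V=[n]$, and $S\subseteq[n-1]$, the cut vector $x^S\in\mathbb{R}^{|E|}$ has coordinates $x^S_{ij}=1$ if $|\{i,j\}\cap S|=1$ and $x^S_{ij}=0$ otherwise, for each edge $(i,j)\in E$. The cut polytope is $\mathrm{Cut}(G)=\mathrm{conv}\{x^S: S\subseteq[n-1]\}\subset\mathbb{R}^{|E|}$, and $\mathrm{vol}(G)$ denotes the $|E|$-dimensional Lebesgue volume of $\mathrm{Cut}(G)$ (for a cycle $C$ regarded as a graph, $\mathrm{vol}(C)$ is the volume of the cut polytope of that cycle). *)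

theory Defs
  imports "HOL-Analysis.Analysis" "HOL-Probability.Probability"
begin

definition simple_graph :: "nat \<Rightarrow> nat set set \<Rightarrow> bool" where
  "simple_graph n E \<longleftrightarrow> n \<ge> 1 \<and>
     (\<forall>e\<in>E. \<exists>i j. e = {i, j} \<and> i \<noteq> j \<and> i \<in> {1..n} \<and> j \<in> {1..n})"

definition adj :: "nat set set \<Rightarrow> nat \<Rightarrow> nat \<Rightarrow> bool" where
  "adj E u v \<longleftrightarrow> {u, v} \<in> E"

definition connected_graph :: "nat \<Rightarrow> nat set set \<Rightarrow> bool" where
  "connected_graph n E \<longleftrightarrow> (\<forall>u\<in>{1..n}. \<forall>v\<in>{1..n}. (adj E)\<^sup>*\<^sup>* u v)"

definition cycle_of :: "nat list \<Rightarrow> nat set set" where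
  "cycle_of vs = {{vs ! i, vs ! ((i + 1) mod length vs)} | i. i < length vs}"

definition is_cycle :: "nat set set \<Rightarrow> nat set set \<Rightarrow> bool" where
  "is_cycle E C \<longleftrightarrow> (\<exists>vs. length vs \<ge> 3 \<and> distinct vs \<and> C = cycle_of vs \<and> C \<subseteq> E)"

definition cycles :: "nat set set \<Rightarrow> nat set set set" where
  "cycles E = {C. is_cycle E C}"

definition cactus :: "nat \<Rightarrow> nat set set \<Rightarrow> bool" where
  "cactus n E \<longleftrightarrow> simple_graph n E \<and> connected_graph n E \<and>
     (\<forall>e\<in>E. \<forall>C1 C2. is_cycle E C1 \<and> is_cycle E C2 \<and> e \<in> C1 \<and> e \<in> C2 \<longrightarrow> C1 = C2)"

definition cut_vec :: "nat set set \<Rightarrow> nat set \<Rightarrow> nat set \<Rightarrow> real" where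
  "cut_vec E S = (\<lambda>e\<in>E. if card (e \<inter> S) = 1 then 1 else 0)"

(* Cut(G) = conv{x^S : S \<subseteq> [n-1]}, written out as the set of convex combinations *)
definition cut_polytope :: "nat \<Rightarrow> nat set set \<Rightarrow> (nat set \<Rightarrow> real) set" where
  "cut_polytope n E = {x. \<exists>c :: nat set \<Rightarrow> real. (\<forall>S. 0 \<le> c S) \<and>
       (\<Sum>S\<in>Pow {1..n-1}. c S) = 1 \<and>
       x = (\<lambda>e\<in>E. \<Sum>S\<in>Pow {1..n-1}. c S * cut_vec E S e)}"

definition cut_vol :: "nat \<Rightarrow> nat set set \<Rightarrow> real" where
  "cut_vol n E = measure (PiM E (\<lambda>_. lborel)) (cut_polytope n E)"

definition cycle_graph :: "nat \<Rightarrow> nat set set" where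
  "cycle_graph k = {{i, i + 1} | i. 1 \<le> i \<and> i < k} \<union> {{k, 1}}"

end

theory Submission
  imports Defs
begin

definition ce :: "nat list \<Rightarrow> nat \<Rightarrow> nat set" where
  "ce vs i = {vs ! i, vs ! ((i + 1) mod length vs)}"

lemma cycle_of_ce: "cycle_of vs = ce vs ` {..<length vs}"
  unfolding cycle_of_def ce_def by auto

lemma ce_inj:
  assumes "distinct vs" "3 \<le> length vs"
  shows "inj_on (ce vs) {..<length vs}"
proof
  fix i j assume i: "i \<in> {..<length vs}" and j: "j \<in> {..<length vs}" and eq: "ce vs i = ce vs j"
  let ?L = "length vs"
  have i1: "(i+1) mod ?L < ?L" and j1: "(j+1) mod ?L < ?L" using assms by (auto intro!: mod_less_divisor)
  have inj: "\<And>a b. a < ?L \<Longrightarrow> b < ?L \<Longrightarrow> vs ! a = vs ! b \<longleftrightarrow> a = b"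
    using assms(1) nth_eq_iff_index_eq by blast
  show "i = j"
  proof (rule ccontr)
    assume ne: "i \<noteq> j"
    from eq have "vs ! i = vs ! j \<or> vs ! i = vs ! ((j+1) mod ?L)"
      unfolding ce_def by (metis doubleton_eq_iff)
    with ne inj i j j1 have a: "i = (j+1) mod ?L" by auto
    from eq have "vs ! j = vs ! i \<or> vs ! j = vs ! ((i+1) mod ?L)"
      unfolding ce_def by (metis doubleton_eq_iff)
    with ne inj i j i1 have b: "j = (i+1) mod ?L" by auto
    have "i = (i + 2) mod ?L" using a b by (simp add: mod_Suc_eq)
    moreover have "i < ?L" using i by simp
    ultimately show False using assms(2)
    proof (cases "i + 2 < ?L")
      case True then show False using \<open>i = (i + 2) mod ?L\<close> by simp
    next
      case False
      then have "(i+2) mod ?L = (i + 2 - ?L) mod ?L" by (simp add: le_mod_geq)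
      also have "\<dots> = i + 2 - ?L" using \<open>i < ?L\<close> assms(2) by (intro mod_less) linarith
      finally show False using \<open>i = (i + 2) mod ?L\<close> assms(2) False by linarith
    qed
  qed
qed

lemma card_doubleton_int:
  assumes "p \<noteq> q" shows "card ({p, q} \<inter> S) = 1 \<longleftrightarrow> (p \<in> S) \<noteq> (q \<in> S)"
  using assms by (cases "p \<in> S"; cases "q \<in> S") (auto simp: Int_insert_left)

lemma parity_path: fixes a :: "nat \<Rightarrow> bool" shows "even (card {i. i < m \<and> a i \<noteq> a (Suc i)}) \<longleftrightarrow> a 0 = a m"
proof (induction m)
  case 0 then show ?case by simp
next
  case (Suc m)
  have eq: "{i. i < Suc m \<and> a i \<noteq> a (Suc i)} = {i. i < m \<and> a i \<noteq> a (Suc i)} \<union> (if a m \<noteq> a (Suc m) then {m} else {})"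
    by (auto simp: less_Suc_eq)
  have c: "card {i. i < Suc m \<and> a i \<noteq> a (Suc i)} = card {i. i < m \<and> a i \<noteq> a (Suc i)} + (if a m \<noteq> a (Suc m) then 1 else 0)"
    unfolding eq by (auto simp: card_insert_if)
  show ?case
    using Suc.IH c by (cases "a m"; cases "a 0"; cases "a (Suc m)") auto
qed

lemma parity_cycle:
  fixes a :: "nat \<Rightarrow> bool" and L :: nat
  assumes "L \<ge> 1"
  shows "even (card {i. i < L \<and> a i \<noteq> a ((i+1) mod L)})"
proof -
  obtain m where m: "L = Suc m" using assms by (cases L) auto
  have eq: "{i. i < L \<and> a i \<noteq> a ((i+1) mod L)} = {i. i < m \<and> a i \<noteq> a (Suc i)} \<union> (if a m \<noteq> a 0 then {m} else {})"
  proof -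
    have *: "\<And>x. x < m \<Longrightarrow> Suc x mod Suc m = Suc x" by simp
    show ?thesis using m by (auto simp: less_Suc_eq *)
  qed
  have c: "card {i. i < L \<and> a i \<noteq> a ((i+1) mod L)} = card {i. i < m \<and> a i \<noteq> a (Suc i)} + (if a m \<noteq> a 0 then 1 else 0)"
    unfolding eq by (auto simp: card_insert_if)
  show ?thesis
    using parity_path[of m a] c by (cases "a m"; cases "a 0") auto
qed

lemma cut_even_cycle:
  assumes "distinct vs" "3 \<le> length vs"
  shows "even (card {e \<in> cycle_of vs. card (e \<inter> S) = 1})"
proof -
  let ?L = "length vs"
  have "{e \<in> cycle_of vs. card (e \<inter> S) = 1} = ce vs ` {i. i < ?L \<and> card (ce vs i \<inter> S) = 1}"
    unfolding cycle_of_ce by auto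
  also have "card \<dots> = card {i. i < ?L \<and> card (ce vs i \<inter> S) = 1}"
    by (rule card_image) (rule inj_on_subset[OF ce_inj[OF assms]], auto)
  also have "{i. i < ?L \<and> card (ce vs i \<inter> S) = 1} = {i. i < ?L \<and> (vs ! i \<in> S) \<noteq> (vs ! ((i+1) mod ?L) \<in> S)}"
  proof -
    have "vs ! i \<noteq> vs ! ((i+1) mod ?L)" if "i < ?L" for i
    proof
      assume "vs ! i = vs ! ((i+1) mod ?L)"
      then have "i = (i+1) mod ?L" using assms that nth_eq_iff_index_eq by (metis mod_less_divisor le_trans less_le_trans zero_less_iff_neq_zero not_numeral_le_zero le0)
      then show False using assms that
        by (metis Suc_eq_plus1 Suc_lessI add_cancel_right_right mod_less mod_self n_not_Suc_n numeral_3_eq_3 zero_less_Suc le_simps(3) not_less_eq_eq)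
    qed
    then show ?thesis
      apply (intro Collect_cong)
      subgoal for i using card_doubleton_int[of "vs!i" "vs!((i+1) mod ?L)" S] by (auto simp: ce_def)
      done
  qed
  finally show ?thesis using parity_cycle[of ?L "\<lambda>i. vs ! i \<in> S"] assms by simp
qed

lemma adj_sym: "adj F a b \<Longrightarrow> adj F b a"
  unfolding adj_def by (simp add: insert_commute)

lemma rt_adj_sym: "(adj F)\<^sup>*\<^sup>* a b \<Longrightarrow> (adj F)\<^sup>*\<^sup>* b a"
proof (induction rule: rtranclp_induct)
  case base then show ?case by simp
next
  case (step y z)
  then show ?case using adj_sym by (metis converse_rtranclp_into_rtranclp)
qed

lemma rt_adj_range: "(adj F)\<^sup>*\<^sup>* a w \<Longrightarrow> w = a \<or> (\<exists>f\<in>F. w \<in> f)"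
  by (induction rule: rtranclp_induct) (auto simp: adj_def)

lemma rt_adj_path:
  assumes "(adj F)\<^sup>*\<^sup>* u v"
  shows "\<exists>ws. ws \<noteq> [] \<and> distinct ws \<and> hd ws = u \<and> last ws = v \<and>
            (\<forall>i. Suc i < length ws \<longrightarrow> {ws ! i, ws ! Suc i} \<in> F)"
  using assms
proof (induction rule: rtranclp_induct)
  case base
  then show ?case by (intro exI[of _ "[u]"]) auto
next
  case (step y z)
  then obtain ws where ws: "ws \<noteq> []" "distinct ws" "hd ws = u" "last ws = y"
    "\<forall>i. Suc i < length ws \<longrightarrow> {ws ! i, ws ! Suc i} \<in> F" by blast
  have yz: "{y, z} \<in> F" using step(2) by (simp add: adj_def)
  show ?case
  proof (cases "z \<in> set ws")
    case True
    then obtain j where j: "j < length ws" "ws ! j = z" by (meson in_set_conv_nth)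
    let ?ws = "take (Suc j) ws"
    show ?thesis
    proof (intro exI[of _ ?ws] conjI allI impI)
      show "?ws \<noteq> []" using ws(1) by simp
      show "distinct ?ws" using ws(2) by simp
      show "hd ?ws = u" using ws(1,3) by (simp add: hd_take)
      show "last ?ws = z" using j by (simp add: take_Suc_conv_app_nth)
      fix i assume "Suc i < length ?ws"
      then show "{?ws ! i, ?ws ! Suc i} \<in> F" using ws(5) j by auto
    qed
  next
    case False
    let ?ws = "ws @ [z]"
    show ?thesis
    proof (intro exI[of _ ?ws] conjI allI impI)
      show "?ws \<noteq> []" by simp
      show "distinct ?ws" using ws(2) False by simp
      show "hd ?ws = u" using ws(1,3) by simp
      show "last ?ws = z" by simp
      fix i assume i: "Suc i < length ?ws"
      show "{?ws ! i, ?ws ! Suc i} \<in> F"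
      proof (cases "Suc i < length ws")
        case True then show ?thesis using ws(5) by (simp add: nth_append)
      next
        case False
        then have "i = length ws - 1" "Suc i = length ws" using i by auto
        then show ?thesis using ws(1,4) yz by (simp add: nth_append last_conv_nth)
      qed
    qed
  qed
qed

definition edges_ok :: "nat \<Rightarrow> nat set set \<Rightarrow> bool" where
  "edges_ok n E \<longleftrightarrow> (\<forall>e\<in>E. \<exists>i j. e = {i, j} \<and> i \<noteq> j \<and> i \<in> {1..n} \<and> j \<in> {1..n})"

lemma cut_vec_insert_restrict: "restrict (cut_vec (insert e F) S) F = cut_vec F S"
  unfolding cut_vec_def by auto

lemma path_cycle:
  assumes ws: "ws \<noteq> []" "distinct ws" "hd ws = u" "last ws = v"
    "\<forall>i. Suc i < length ws \<longrightarrow> {ws ! i, ws ! Suc i} \<in> F"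
    and uv: "u \<noteq> v" "{u, v} \<notin> F"
  shows "3 \<le> length ws" "cycle_of ws \<subseteq> insert {u, v} F" "{u,v} \<in> cycle_of ws"
proof -
  have "length ws \<noteq> 1" using ws uv by (metis One_nat_def hd_conv_nth last_conv_nth diff_self_eq_0 ws(1))
  moreover have "length ws \<noteq> 2"
  proof
    assume "length ws = 2"
    then have "{ws ! 0, ws ! Suc 0} \<in> F" using ws(5) by auto
    moreover have "ws ! 0 = u" "ws ! Suc 0 = v" using ws \<open>length ws = 2\<close>
      by (auto simp: hd_conv_nth last_conv_nth)
    ultimately show False using uv by simp
  qed
  moreover have "length ws \<noteq> 0" using ws by simp
  ultimately show L: "3 \<le> length ws" by linarith
  show "cycle_of ws \<subseteq> insert {u, v} F"
  proof
    fix e assume "e \<in> cycle_of ws"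
    then obtain i where i: "i < length ws" "e = {ws ! i, ws ! ((i+1) mod length ws)}"
      unfolding cycle_of_def by auto
    show "e \<in> insert {u, v} F"
    proof (cases "Suc i < length ws")
      case True then show ?thesis using ws(5) i by auto
    next
      case False
      then have si: "Suc i = length ws" using i by simp
      then have "i = length ws - 1" "(i+1) mod length ws = 0" by auto
      then have "e = {v, u}" using i ws by (simp add: hd_conv_nth last_conv_nth)
      then show ?thesis by auto
    qed
  qed
  have "{ws ! (length ws - 1), ws ! ((length ws - 1 + 1) mod length ws)} \<in> cycle_of ws"
    unfolding cycle_of_def using ws(1) by (intro CollectI exI[of _ "length ws - 1"]) auto
  moreover have "(length ws - 1 + 1) mod length ws = 0" using ws(1) by simp
  ultimately show "{u, v} \<in> cycle_of ws" using ws by (simp add: hd_conv_nth last_conv_nth insert_commute)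
qed

lemma cut_vec_cycle_even:
  assumes "is_cycle E C"
  shows "even (card {f \<in> C. cut_vec E S f = 1})"
proof -
  obtain vs where vs: "3 \<le> length vs" "distinct vs" "C = cycle_of vs" "C \<subseteq> E"
    using assms unfolding is_cycle_def by auto
  have "{f \<in> C. cut_vec E S f = 1} = {f \<in> cycle_of vs. card (f \<inter> S) = 1}"
    using vs by (auto simp: cut_vec_def)
  then show ?thesis using cut_even_cycle[OF vs(2,1)] by simp
qed

lemma parity_flip:
  fixes x y :: "nat set \<Rightarrow> real"
  assumes "finite C" "e \<in> C" "\<forall>f\<in>C. f \<noteq> e \<longrightarrow> x f = y f" "x e \<noteq> y e"
    "x e = 0 \<or> x e = 1" "y e = 0 \<or> y e = 1"
    "even (card {f \<in> C. x f = 1})" "even (card {f \<in> C. y f = 1})"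
  shows False
proof -
  define A where "A = {f \<in> C. f \<noteq> e \<and> x f = 1}"
  have fA: "finite A" "e \<notin> A" using assms(1) by (auto simp: A_def)
  have "{f \<in> C. x f = 1} = (if x e = 1 then insert e A else A)"
    using assms(2) by (auto simp: A_def)
  moreover have "{f \<in> C. y f = 1} = (if y e = 1 then insert e A else A)"
    using assms(2,3) by (auto simp: A_def)
  ultimately show False using assms(4-8) fA by (auto split: if_splits)
qed

lemma cut_exists:
  assumes "finite E" "edges_ok n E" "x \<in> extensional E" "\<forall>e\<in>E. x e = 0 \<or> x e = 1"
    "\<forall>C. is_cycle E C \<longrightarrow> even (card {e\<in>C. x e = 1})"
  shows "\<exists>S \<subseteq> {1..n-1}. cut_vec E S = x"
  using assms(1-5)
proof (induction E arbitrary: x rule: finite_induct)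
  case empty
  then show ?case by (intro exI[of _ "{}"]) (auto simp: cut_vec_def extensional_def)
next
  case (insert e F)
  define x' where "x' = restrict x F"
  have "\<exists>S \<subseteq> {1..n-1}. cut_vec F S = x'"
  proof (rule insert.IH)
    show "edges_ok n F" using insert.prems(1) by (auto simp: edges_ok_def)
    show "x' \<in> extensional F" by (simp add: x'_def)
    show "\<forall>e\<in>F. x' e = 0 \<or> x' e = 1" using insert.prems(3) by (auto simp: x'_def)
    show "\<forall>C. is_cycle F C \<longrightarrow> even (card {e \<in> C. x' e = 1})"
    proof (intro allI impI)
      fix C assume C: "is_cycle F C"
      then have "is_cycle (insert e F) C" "C \<subseteq> F" unfolding is_cycle_def by auto
      moreover have "{f \<in> C. x' f = 1} = {f \<in> C. x f = 1}" using \<open>C \<subseteq> F\<close> by (auto simp: x'_def)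
      ultimately show "even (card {e \<in> C. x' e = 1})" using insert.prems(4) by simp
    qed
  qed
  then obtain S' where S': "S' \<subseteq> {1..n-1}" "cut_vec F S' = x'" by blast
  obtain u v where uv: "e = {u,v}" "u \<noteq> v" "u \<in> {1..n}" "v \<in> {1..n}"
    using insert.prems(1) by (auto simp: edges_ok_def)
  define y where "y = cut_vec (insert e F) S'"
  have agree: "\<forall>f\<in>F. y f = x f"
  proof
    fix f assume "f \<in> F"
    then have "y f = cut_vec F S' f" unfolding y_def cut_vec_def by auto
    then show "y f = x f" using S'(2) \<open>f \<in> F\<close> by (simp add: x'_def)
  qed
  have y01: "y e = 0 \<or> y e = 1" by (simp add: y_def cut_vec_def)
  show ?case
  proof (cases "y e = x e")
    case True
    have "y = x"
    proof
      fix f show "y f = x f"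
        using True agree insert.prems(2) by (cases "f \<in> insert e F") (auto simp: y_def cut_vec_def extensional_def)
    qed
    then show ?thesis using S'(1) y_def by blast
  next
    case bad: False
    have notconn: "\<not> (adj F)\<^sup>*\<^sup>* u v"
    proof
      assume "(adj F)\<^sup>*\<^sup>* u v"
      then obtain ws where ws: "ws \<noteq> []" "distinct ws" "hd ws = u" "last ws = v"
            "\<forall>i. Suc i < length ws \<longrightarrow> {ws ! i, ws ! Suc i} \<in> F"
        using rt_adj_path by blast
      have "{u, v} \<notin> F" using insert.hyps(2) uv(1) by simp
      note pc = path_cycle[OF ws uv(2) this]
      let ?C = "cycle_of ws"
      have cyc: "is_cycle (insert e F) ?C" unfolding is_cycle_def using pc ws(2) uv(1) by auto
      have fin: "finite ?C" unfolding cycle_of_ce by simp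
      show False
      proof (rule parity_flip[OF fin, of e x y])
        show "e \<in> ?C" using pc uv by simp
        show "\<forall>f\<in>?C. f \<noteq> e \<longrightarrow> x f = y f" using pc agree uv(1) by auto
        show "x e \<noteq> y e" using bad by simp
        show "x e = 0 \<or> x e = 1" using insert.prems(3) by simp
        show "y e = 0 \<or> y e = 1" by (rule y01)
        show "even (card {f \<in> ?C. x f = 1})" using insert.prems(4) cyc by simp
        show "even (card {f \<in> ?C. y f = 1})" unfolding y_def by (rule cut_vec_cycle_even[OF cyc])
      qed
    qed
    obtain a b where ab: "e = {a, b}" "a \<noteq> b" "a \<in> {1..n}" "\<not> (adj F)\<^sup>*\<^sup>* a b" "\<not> (adj F)\<^sup>*\<^sup>* a n"
    proof (cases "(adj F)\<^sup>*\<^sup>* u n")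
      case False then show ?thesis using that uv notconn by blast
    next
      case True
      have "\<not> (adj F)\<^sup>*\<^sup>* v n"
      proof
        assume "(adj F)\<^sup>*\<^sup>* v n"
        then have "(adj F)\<^sup>*\<^sup>* n v" by (rule rt_adj_sym)
        with True have "(adj F)\<^sup>*\<^sup>* u v" by simp
        with notconn show False by simp
      qed
      moreover have "\<not> (adj F)\<^sup>*\<^sup>* v u" using notconn rt_adj_sym by blast
      ultimately show ?thesis using that uv by (metis insert_commute)
    qed
    define R where "R = {w. (adj F)\<^sup>*\<^sup>* a w}"
    define S where "S = {w. (w \<in> S') \<noteq> (w \<in> R)}"
    have aR: "a \<in> R" "b \<notin> R" "n \<notin> R" using ab by (auto simp: R_def)
    have SR: "S \<subseteq> {1..n-1}"
    proof
      fix w assume "w \<in> S"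
      show "w \<in> {1..n-1}"
      proof (cases "w \<in> S'")
        case True then show ?thesis using S'(1) by auto
      next
        case False
        then have wR: "w \<in> R" using \<open>w \<in> S\<close> by (auto simp: S_def)
        then have "w = a \<or> (\<exists>f\<in>F. w \<in> f)" unfolding R_def by (simp add: rt_adj_range)
        then have "w \<in> {1..n}" using ab(3) insert.prems(1) by (auto simp: edges_ok_def)
        moreover have "w \<noteq> n" using wR aR by auto
        ultimately show ?thesis by auto
      qed
    qed
    have Fsame: "card (f \<inter> S) = 1 \<longleftrightarrow> card (f \<inter> S') = 1" if f: "f \<in> F" for f
    proof -
      obtain p q where pq: "f = {p, q}" "p \<noteq> q" using f insert.prems(1) by (auto simp: edges_ok_def)
      have "adj F p q" "adj F q p" using pq f by (auto simp: adj_def insert_commute)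
      then have "p \<in> R \<longleftrightarrow> q \<in> R" unfolding R_def mem_Collect_eq
        by (meson rtranclp.rtrancl_into_rtrancl)
      then show ?thesis using pq card_doubleton_int[OF pq(2), of S] card_doubleton_int[OF pq(2), of S']
        by (auto simp: S_def)
    qed
    have esame: "card (e \<inter> S) = 1 \<longleftrightarrow> \<not> card (e \<inter> S') = 1"
      using card_doubleton_int[OF ab(2), of S] card_doubleton_int[OF ab(2), of S'] aR ab(1)
      by (auto simp: S_def)
    have "cut_vec (insert e F) S = x"
    proof
      fix f show "cut_vec (insert e F) S f = x f"
      proof (cases "f \<in> insert e F")
        case False then show ?thesis using insert.prems(2) by (auto simp: cut_vec_def extensional_def)
      next
        case True
        show ?thesis
        proof (cases "f = e")
          case True
          then show ?thesis using esame bad insert.prems(3) by (auto simp: y_def cut_vec_def)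
        next
          case False
          then have "f \<in> F" using \<open>f \<in> insert e F\<close> by simp
          then have "cut_vec (insert e F) S f = y f" using Fsame by (simp add: y_def cut_vec_def)
          then show ?thesis using agree \<open>f \<in> F\<close> by simp
        qed
      qed
    qed
    then show ?thesis using SR by blast
  qed
qed

definition conv' :: "'i set \<Rightarrow> ('i \<Rightarrow> real) set \<Rightarrow> ('i \<Rightarrow> real) set" where
  "conv' I W = {x. \<exists>c. (\<forall>w. 0 \<le> c w) \<and> (\<Sum>w\<in>W. c w) = 1 \<and> x = (\<lambda>i\<in>I. \<Sum>w\<in>W. c w * w i)}"

lemma fiber_sum:
  fixes h :: "'a \<Rightarrow> real"
  assumes "finite A"
  shows "(\<Sum>a\<in>A. h a) = (\<Sum>w\<in>f ` A. \<Sum>a\<in>{a\<in>A. f a = w}. h a)"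
  using sum.image_gen[OF assms, of h f] by simp

lemma conv_image:
  fixes f :: "'a \<Rightarrow> 'i \<Rightarrow> real"
  assumes A: "finite A"
  shows "{x. \<exists>c. (\<forall>a. 0 \<le> c a) \<and> (\<Sum>a\<in>A. c a) = 1 \<and> x = (\<lambda>i\<in>I. \<Sum>a\<in>A. c a * f a i)} = conv' I (f ` A)"
proof
  show "{x. \<exists>c. (\<forall>a. 0 \<le> c a) \<and> (\<Sum>a\<in>A. c a) = 1 \<and> x = (\<lambda>i\<in>I. \<Sum>a\<in>A. c a * f a i)} \<subseteq> conv' I (f ` A)"
  proof safe
    fix c :: "'a \<Rightarrow> real" assume c: "\<forall>a. 0 \<le> c a" "(\<Sum>a\<in>A. c a) = 1"
    define c' where "c' w = (\<Sum>a\<in>{a\<in>A. f a = w}. c a)" for w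
    have "\<forall>w. 0 \<le> c' w" unfolding c'_def using c by (auto intro: sum_nonneg)
    moreover have "(\<Sum>w\<in>f ` A. c' w) = 1" unfolding c'_def using c fiber_sum[OF A, of c f] by simp
    moreover have "(\<lambda>i\<in>I. \<Sum>a\<in>A. c a * f a i) = (\<lambda>i\<in>I. \<Sum>w\<in>f ` A. c' w * w i)"
    proof (rule restrict_ext)
      fix i
      have "(\<Sum>a\<in>A. c a * f a i) = (\<Sum>w\<in>f ` A. \<Sum>a\<in>{a\<in>A. f a = w}. c a * f a i)"
        by (rule fiber_sum[OF A])
      also have "\<dots> = (\<Sum>w\<in>f ` A. c' w * w i)"
        unfolding c'_def sum_distrib_right by (intro sum.cong refl) auto
      finally show "(\<Sum>a\<in>A. c a * f a i) = (\<Sum>w\<in>f ` A. c' w * w i)" .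
    qed
    ultimately show "(\<lambda>i\<in>I. \<Sum>a\<in>A. c a * f a i) \<in> conv' I (f ` A)"
      unfolding conv'_def by blast
  qed
  show "conv' I (f ` A) \<subseteq> {x. \<exists>c. (\<forall>a. 0 \<le> c a) \<and> (\<Sum>a\<in>A. c a) = 1 \<and> x = (\<lambda>i\<in>I. \<Sum>a\<in>A. c a * f a i)}"
  proof (safe, unfold conv'_def, safe)
    fix c :: "('i \<Rightarrow> real) \<Rightarrow> real" assume c: "\<forall>w. 0 \<le> c w" "(\<Sum>w\<in>f ` A. c w) = 1"
    define N where "N w = real (card {a\<in>A. f a = w})" for w
    have Npos: "N w > 0" if "w \<in> f ` A" for w
      using that A unfolding N_def by (auto simp: card_gt_0_iff)
    define d where "d a = c (f a) / N (f a)" for a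
    have fib: "(\<Sum>a\<in>{a\<in>A. f a = w}. d a * g w) = c w * g w" if "w \<in> f ` A" for w and g :: "('i \<Rightarrow> real) \<Rightarrow> real"
    proof -
      have "(\<Sum>a\<in>{a\<in>A. f a = w}. d a * g w) = (\<Sum>a\<in>{a\<in>A. f a = w}. c w / N w * g w)"
        unfolding d_def by (intro sum.cong) auto
      also have "\<dots> = N w * (c w / N w * g w)" by (simp add: N_def)
      also have "\<dots> = c w * g w" using Npos[OF that] by simp
      finally show ?thesis .
    qed
    have "\<forall>a. 0 \<le> d a" unfolding d_def N_def using c by auto
    moreover have "(\<Sum>a\<in>A. d a) = 1"
    proof -
      have "(\<Sum>a\<in>A. d a) = (\<Sum>w\<in>f ` A. \<Sum>a\<in>{a\<in>A. f a = w}. d a * (\<lambda>_. 1) w)"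
        using fiber_sum[OF A, of d f] by simp
      also have "\<dots> = (\<Sum>w\<in>f ` A. c w)" using fib[where g="\<lambda>_. 1"] by simp
      finally show ?thesis using c by simp
    qed
    moreover have "(\<lambda>i\<in>I. \<Sum>w\<in>f ` A. c w * w i) = (\<lambda>i\<in>I. \<Sum>a\<in>A. d a * f a i)"
    proof (rule restrict_ext)
      fix i
      have "(\<Sum>a\<in>A. d a * f a i) = (\<Sum>w\<in>f ` A. \<Sum>a\<in>{a\<in>A. f a = w}. d a * f a i)"
        by (rule fiber_sum[OF A])
      also have "\<dots> = (\<Sum>w\<in>f ` A. \<Sum>a\<in>{a\<in>A. f a = w}. d a * (\<lambda>w. w i) w)"
        by (intro sum.cong refl) auto
      also have "\<dots> = (\<Sum>w\<in>f ` A. c w * w i)" using fib[where g="\<lambda>w. w i"] by simp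
      finally show "(\<Sum>w\<in>f ` A. c w * w i) = (\<Sum>a\<in>A. d a * f a i)" by simp
    qed
    ultimately show "\<exists>d. (\<forall>a. 0 \<le> d a) \<and> (\<Sum>a\<in>A. d a) = 1 \<and> (\<lambda>i\<in>I. \<Sum>w\<in>f ` A. c w * w i) = (\<lambda>i\<in>I. \<Sum>a\<in>A. d a * f a i)"
      by blast
  qed
qed

lemma conv_mono:
  assumes "finite B" "A \<subseteq> B"
  shows "conv' I A \<subseteq> conv' I B"
proof
  fix x assume "x \<in> conv' I A"
  then obtain c where c: "\<forall>w. 0 \<le> c w" "(\<Sum>w\<in>A. c w) = 1" "x = (\<lambda>i\<in>I. \<Sum>w\<in>A. c w * w i)"
    unfolding conv'_def by blast
  define c' where "c' w = (if w \<in> A then c w else 0)" for w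
  have "(\<Sum>w\<in>B. c' w) = (\<Sum>w\<in>A. c w)"
    unfolding c'_def using assms by (simp add: sum.If_cases Int_absorb1)
  moreover have "(\<Sum>w\<in>B. c' w * w i) = (\<Sum>w\<in>A. c w * w i)" for i
  proof -
    have "(\<Sum>w\<in>B. c' w * w i) = (\<Sum>w\<in>B. if w \<in> A then c w * w i else 0)"
      by (intro sum.cong) (auto simp: c'_def)
    then show ?thesis using assms by (simp add: sum.If_cases Int_absorb1)
  qed
  ultimately show "x \<in> conv' I B" unfolding conv'_def using c
    by (intro CollectI exI[of _ c']) (auto simp: c'_def)
qed

lemma conv_ext: "conv' I W \<subseteq> extensional I"
  unfolding conv'_def by auto

definition P2b :: "'i set \<Rightarrow> 'i set \<Rightarrow> ('i \<Rightarrow> real) set \<Rightarrow> ('i \<Rightarrow> real) set \<Rightarrow> ('i \<Rightarrow> real) set" where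
  "P2b I1 I2 A1 A2 = {x \<in> extensional (I1 \<union> I2). restrict x I1 \<in> A1 \<and> restrict x I2 \<in> A2}"

lemma merge_restrict_eq:
  assumes "x \<in> extensional (I1 \<union> I2)"
  shows "merge I1 I2 (restrict x I1, restrict x I2) = x"
  using assms by (auto simp: merge_def extensional_def fun_eq_iff)

lemma P2b_image:
  assumes "I1 \<inter> I2 = {}" "A1 \<subseteq> extensional I1" "A2 \<subseteq> extensional I2"
  shows "P2b I1 I2 A1 A2 = merge I1 I2 ` (A1 \<times> A2)"
proof
  show "P2b I1 I2 A1 A2 \<subseteq> merge I1 I2 ` (A1 \<times> A2)"
  proof
    fix x assume "x \<in> P2b I1 I2 A1 A2"
    then have "x \<in> extensional (I1 \<union> I2)" "restrict x I1 \<in> A1" "restrict x I2 \<in> A2"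
      unfolding P2b_def by auto
    then show "x \<in> merge I1 I2 ` (A1 \<times> A2)"
      using merge_restrict_eq by (metis SigmaI image_eqI)
  qed
  show "merge I1 I2 ` (A1 \<times> A2) \<subseteq> P2b I1 I2 A1 A2"
  proof safe
    fix a b assume ab: "a \<in> A1" "b \<in> A2"
    then have "a \<in> extensional I1" "b \<in> extensional I2" using assms by auto
    have r1: "restrict (merge I1 I2 (a, b)) I1 = a"
      using assms(1) \<open>a \<in> extensional I1\<close> by (simp add: extensional_restrict)
    have r2: "restrict (merge I1 I2 (a, b)) I2 = b"
      using assms(1) \<open>b \<in> extensional I2\<close> by (simp add: extensional_restrict)
    show "merge I1 I2 (a, b) \<in> P2b I1 I2 A1 A2"
      unfolding P2b_def using r1 r2 ab by simp
  qed
qed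

lemma conv_two:
  assumes dj: "I1 \<inter> I2 = {}" and fin: "finite W1" "finite W2"
    and ext: "W1 \<subseteq> extensional I1" "W2 \<subseteq> extensional I2"
  shows "conv' (I1 \<union> I2) (P2b I1 I2 W1 W2) = P2b I1 I2 (conv' I1 W1) (conv' I2 W2)"
proof -
  let ?mg = "merge I1 I2"
  let ?I = "I1 \<union> I2"
  have finp: "finite (W1 \<times> W2)" using fin by simp
  have eq0: "conv' ?I (P2b I1 I2 W1 W2) = {x. \<exists>c. (\<forall>a. 0 \<le> c a) \<and> (\<Sum>a\<in>W1 \<times> W2. c a) = 1 \<and> x = (\<lambda>i\<in>?I. \<Sum>a\<in>W1 \<times> W2. c a * ?mg a i)}"
    unfolding P2b_image[OF dj ext] by (rule conv_image[OF finp, symmetric])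
  show ?thesis
  proof
    show "conv' ?I (P2b I1 I2 W1 W2) \<subseteq> P2b I1 I2 (conv' I1 W1) (conv' I2 W2)"
    proof
      fix x assume "x \<in> conv' ?I (P2b I1 I2 W1 W2)"
      then obtain c where c: "\<forall>a. 0 \<le> c a" "(\<Sum>a\<in>W1 \<times> W2. c a) = 1" "x = (\<lambda>i\<in>?I. \<Sum>a\<in>W1 \<times> W2. c a * ?mg a i)"
        unfolding eq0 by blast
      have "restrict x I1 = (\<lambda>i\<in>I1. \<Sum>a\<in>W1 \<times> W2. c a * fst a i)"
      proof (rule restrict_ext)
        fix i assume "i \<in> I1"
        then show "x i = (\<Sum>a\<in>W1 \<times> W2. c a * fst a i)"
          unfolding c(3) by (simp add: merge_def split_beta)
      qed
      then have "restrict x I1 \<in> conv' I1 (fst ` (W1 \<times> W2))"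
        using conv_image[OF finp, of fst I1] c(1,2) by blast
      moreover have "conv' I1 (fst ` (W1 \<times> W2)) \<subseteq> conv' I1 W1" by (rule conv_mono) (use fin in auto)
      moreover have "restrict x I2 = (\<lambda>i\<in>I2. \<Sum>a\<in>W1 \<times> W2. c a * snd a i)"
      proof (rule restrict_ext)
        fix i assume "i \<in> I2"
        then have "i \<notin> I1" using dj by blast
        with \<open>i \<in> I2\<close> show "x i = (\<Sum>a\<in>W1 \<times> W2. c a * snd a i)"
          unfolding c(3) by (simp add: merge_def split_beta)
      qed
      then have "restrict x I2 \<in> conv' I2 (snd ` (W1 \<times> W2))"
        using conv_image[OF finp, of snd I2] c(1,2) by blast
      moreover have "conv' I2 (snd ` (W1 \<times> W2)) \<subseteq> conv' I2 W2" by (rule conv_mono) (use fin in auto)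
      moreover have "x \<in> extensional ?I" using c(3) by simp
      ultimately show "x \<in> P2b I1 I2 (conv' I1 W1) (conv' I2 W2)" unfolding P2b_def by blast
    qed
    show "P2b I1 I2 (conv' I1 W1) (conv' I2 W2) \<subseteq> conv' ?I (P2b I1 I2 W1 W2)"
    proof
      fix x assume "x \<in> P2b I1 I2 (conv' I1 W1) (conv' I2 W2)"
      then have x: "x \<in> extensional ?I" "restrict x I1 \<in> conv' I1 W1" "restrict x I2 \<in> conv' I2 W2"
        unfolding P2b_def by auto
      obtain c1 where c1: "\<forall>w. 0 \<le> c1 w" "(\<Sum>w\<in>W1. c1 w) = 1" "restrict x I1 = (\<lambda>i\<in>I1. \<Sum>w\<in>W1. c1 w * w i)"
        using x(2) unfolding conv'_def by blast
      obtain c2 where c2: "\<forall>w. 0 \<le> c2 w" "(\<Sum>w\<in>W2. c2 w) = 1" "restrict x I2 = (\<lambda>i\<in>I2. \<Sum>w\<in>W2. c2 w * w i)"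
        using x(3) unfolding conv'_def by blast
      define c where "c p = c1 (fst p) * c2 (snd p)" for p
      have "\<forall>a. 0 \<le> c a" unfolding c_def using c1(1) c2(1) by simp
      moreover have "(\<Sum>a\<in>W1 \<times> W2. c a) = 1"
      proof -
        have "(\<Sum>w\<in>W1. \<Sum>v\<in>W2. c1 w * c2 v) = (\<Sum>a\<in>W1 \<times> W2. c a)"
          by (simp add: sum.cartesian_product c_def split_beta)
        moreover have "(\<Sum>w\<in>W1. \<Sum>v\<in>W2. c1 w * c2 v) = (\<Sum>w\<in>W1. c1 w) * (\<Sum>v\<in>W2. c2 v)"
          by (rule sum_product[symmetric])
        ultimately show ?thesis using c1(2) c2(2) by simp
      qed
      moreover have "x = (\<lambda>i\<in>?I. \<Sum>a\<in>W1 \<times> W2. c a * ?mg a i)"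
      proof
        fix i
        show "x i = (\<lambda>i\<in>?I. \<Sum>a\<in>W1 \<times> W2. c a * ?mg a i) i"
        proof (cases "i \<in> I1")
          case True
          have "(\<Sum>w\<in>W1. \<Sum>v\<in>W2. c1 w * c2 v * w i) = (\<Sum>a\<in>W1 \<times> W2. c a * ?mg a i)"
            using True by (simp add: sum.cartesian_product c_def split_beta merge_def)
          moreover have "(\<Sum>w\<in>W1. \<Sum>v\<in>W2. c1 w * c2 v * w i) = (\<Sum>w\<in>W1. c1 w * w i * (\<Sum>v\<in>W2. c2 v))"
          proof (rule sum.cong[OF refl])
            fix w
            have "(\<Sum>v\<in>W2. c1 w * c2 v * w i) = (\<Sum>v\<in>W2. (c1 w * w i) * c2 v)"
              by (rule sum.cong) (simp_all add: mult_ac)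
            also have "\<dots> = c1 w * w i * (\<Sum>v\<in>W2. c2 v)" by (rule sum_distrib_left[symmetric])
            finally show "(\<Sum>v\<in>W2. c1 w * c2 v * w i) = c1 w * w i * (\<Sum>v\<in>W2. c2 v)" .
          qed
          ultimately have "(\<Sum>a\<in>W1 \<times> W2. c a * ?mg a i) = (\<Sum>w\<in>W1. c1 w * w i * (\<Sum>v\<in>W2. c2 v))"
            by simp
          also have "\<dots> = x i" using c2(2) fun_cong[OF c1(3), of i] True by simp
          finally show ?thesis using True by simp
        next
          case F1: False
          show ?thesis
          proof (cases "i \<in> I2")
            case True
            have "(\<Sum>w\<in>W1. \<Sum>v\<in>W2. c1 w * (c2 v * v i)) = (\<Sum>a\<in>W1 \<times> W2. c a * ?mg a i)"
              using True F1 by (simp add: sum.cartesian_product c_def split_beta merge_def mult.assoc)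
            moreover have "(\<Sum>w\<in>W1. \<Sum>v\<in>W2. c1 w * (c2 v * v i)) = (\<Sum>w\<in>W1. c1 w) * (\<Sum>v\<in>W2. c2 v * v i)"
              by (rule sum_product[symmetric])
            ultimately have "(\<Sum>a\<in>W1 \<times> W2. c a * ?mg a i) = (\<Sum>w\<in>W1. c1 w) * (\<Sum>v\<in>W2. c2 v * v i)"
              by simp
            also have "\<dots> = x i" using c1(2) fun_cong[OF c2(3), of i] True by simp
            finally show ?thesis using True by simp
          next
            case False
            then show ?thesis using F1 x(1) by (simp add: extensional_def)
          qed
        qed
      qed
      ultimately show "x \<in> conv' ?I (P2b I1 I2 W1 W2)" unfolding eq0 by (intro CollectI exI[of _ c]) simp
    qed
  qed
qed

definition BProd :: "'i set set \<Rightarrow> ('i set \<Rightarrow> ('i \<Rightarrow> real) set) \<Rightarrow> ('i \<Rightarrow> real) set" where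
  "BProd BB A = {x \<in> extensional (\<Union>BB). \<forall>B\<in>BB. restrict x B \<in> A B}"

lemma Prod_insert: "BProd (insert B BB) A = P2b B (\<Union>BB) (A B) (BProd BB A)"
proof -
  have rr: "restrict (restrict x (\<Union>BB)) B' = restrict x B'" if "B' \<in> BB" for x :: "'a \<Rightarrow> real" and B'
    using that by (auto simp: fun_eq_iff)
  show ?thesis
    unfolding BProd_def P2b_def using rr by auto
qed

lemma Prod_empty: "BProd {} A = {\<lambda>_. undefined}"
  unfolding BProd_def by (auto simp: extensional_def)

lemma conv_family:
  assumes "finite BB" "\<forall>B1\<in>BB. \<forall>B2\<in>BB. B1 \<noteq> B2 \<longrightarrow> B1 \<inter> B2 = {}"
    "\<forall>B\<in>BB. finite (W B) \<and> W B \<subseteq> extensional B"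
  shows "finite (BProd BB W) \<and> conv' (\<Union>BB) (BProd BB W) = BProd BB (\<lambda>B. conv' B (W B))"
  using assms
proof (induction BB rule: finite_induct)
  case empty
  have "conv' {} {\<lambda>_. undefined} = {\<lambda>_. undefined :: real}"
    unfolding conv'_def by (auto intro!: exI[of _ "\<lambda>_. 1"])
  then show ?case by (simp add: Prod_empty)
next
  case (insert B F)
  have dj: "B \<inter> \<Union>F = {}"
  proof (rule ccontr)
    assume "B \<inter> \<Union>F \<noteq> {}"
    then obtain z B' where "z \<in> B" "B' \<in> F" "z \<in> B'" by blast
    moreover have "B \<noteq> B'" using insert.hyps(2) \<open>B' \<in> F\<close> by blast
    ultimately show False using insert.prems(1) by blast
  qed
  have h1: "\<forall>B1\<in>F. \<forall>B2\<in>F. B1 \<noteq> B2 \<longrightarrow> B1 \<inter> B2 = {}" using insert.prems(1) by blast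
  have h2: "\<forall>B\<in>F. finite (W B) \<and> W B \<subseteq> extensional B" using insert.prems(2) by blast
  have IH: "finite (BProd F W)" "conv' (\<Union>F) (BProd F W) = BProd F (\<lambda>B. conv' B (W B))"
    using insert.IH[OF h1 h2] by auto
  have WB: "finite (W B)" "W B \<subseteq> extensional B" using insert.prems by auto
  have PF: "BProd F W \<subseteq> extensional (\<Union>F)" unfolding BProd_def by auto
  have "finite (BProd (insert B F) W)"
    unfolding Prod_insert P2b_image[OF dj WB(2) PF] using WB(1) IH(1) by simp
  moreover have "conv' (\<Union>(insert B F)) (BProd (insert B F) W) = BProd (insert B F) (\<lambda>B. conv' B (W B))"
    unfolding Prod_insert using conv_two[OF dj WB(1) IH(1) WB(2) PF] IH(2) by simp
  ultimately show ?case by blast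
qed

abbreviation "LB I \<equiv> PiM I (\<lambda>_. lborel :: real measure)"

lemma space_LB: "space (LB I) = extensional I"
  by (auto simp: space_PiM PiE_def)

lemma meas_two:
  fixes I1 I2 :: "'i set"
  assumes dj: "I1 \<inter> I2 = {}" and fin: "finite I1" "finite I2"
    and A: "A1 \<in> sets (LB I1)" "A2 \<in> sets (LB I2)"
  shows "P2b I1 I2 A1 A2 \<in> sets (LB (I1 \<union> I2))"
    "emeasure (LB (I1 \<union> I2)) (P2b I1 I2 A1 A2) = emeasure (LB I1) A1 * emeasure (LB I2) A2"
proof -
  interpret product_sigma_finite "\<lambda>_::'i. lborel :: real measure" by standard
  interpret I2: finite_product_sigma_finite "\<lambda>_::'i. lborel :: real measure" I2 by standard fact
  have eqP: "P2b I1 I2 A1 A2 = ((\<lambda>f. restrict f I1) -` A1 \<inter> space (LB (I1 \<union> I2))) \<inter>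
                               ((\<lambda>f. restrict f I2) -` A2 \<inter> space (LB (I1 \<union> I2)))"
    unfolding P2b_def space_LB by auto
  show S: "P2b I1 I2 A1 A2 \<in> sets (LB (I1 \<union> I2))"
    unfolding eqP
    by (intro sets.Int measurable_sets[OF measurable_restrict_subset A(1)] measurable_sets[OF measurable_restrict_subset A(2)]) auto
  have pre: "merge I1 I2 -` P2b I1 I2 A1 A2 \<inter> space (LB I1 \<Otimes>\<^sub>M LB I2) = A1 \<times> A2"
  proof -
    have A1s: "A1 \<subseteq> extensional I1" using sets.sets_into_space[OF A(1)] space_LB by blast
    have A2s: "A2 \<subseteq> extensional I2" using sets.sets_into_space[OF A(2)] space_LB by blast
    show ?thesis
    proof (intro equalityI subsetI)
      fix p assume p: "p \<in> merge I1 I2 -` P2b I1 I2 A1 A2 \<inter> space (LB I1 \<Otimes>\<^sub>M LB I2)"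
      obtain a b where pab: "p = (a, b)" by (cases p)
      from p have "restrict a I1 \<in> A1" "restrict b I2 \<in> A2" "a \<in> extensional I1" "b \<in> extensional I2"
        using dj unfolding pab by (auto simp: P2b_def space_pair_measure space_LB)
      then show "p \<in> A1 \<times> A2" unfolding pab by (simp add: extensional_restrict)
    next
      fix p assume "p \<in> A1 \<times> A2"
      then obtain a b where pab: "p = (a, b)" and ab: "a \<in> A1" "b \<in> A2" by blast
      then have e: "a \<in> extensional I1" "b \<in> extensional I2" using A1s A2s by auto
      have r1: "restrict (merge I1 I2 (a, b)) I1 = a"
        using dj e(1) by (simp add: extensional_restrict)
      have r2: "restrict (merge I1 I2 (a, b)) I2 = b"
        using dj e(2) by (simp add: extensional_restrict)
      have "merge I1 I2 (a, b) \<in> P2b I1 I2 A1 A2" unfolding P2b_def using r1 r2 ab by simp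
      moreover have "(a, b) \<in> space (LB I1 \<Otimes>\<^sub>M LB I2)" using e by (simp add: space_pair_measure space_LB)
      ultimately show "p \<in> merge I1 I2 -` P2b I1 I2 A1 A2 \<inter> space (LB I1 \<Otimes>\<^sub>M LB I2)" using pab by simp
    qed
  qed
  have "emeasure (LB (I1 \<union> I2)) (P2b I1 I2 A1 A2) =
        emeasure (distr (LB I1 \<Otimes>\<^sub>M LB I2) (LB (I1 \<union> I2)) (merge I1 I2)) (P2b I1 I2 A1 A2)"
    using distr_merge[OF dj fin] by simp
  also have "\<dots> = emeasure (LB I1 \<Otimes>\<^sub>M LB I2) (A1 \<times> A2)"
    by (subst emeasure_distr[OF measurable_merge S]) (simp add: pre)
  also have "\<dots> = emeasure (LB I1) A1 * emeasure (LB I2) A2"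
    by (rule I2.emeasure_pair_measure_Times[OF A])
  finally show "emeasure (LB (I1 \<union> I2)) (P2b I1 I2 A1 A2) = emeasure (LB I1) A1 * emeasure (LB I2) A2" .
qed

lemma meas_family:
  fixes BB :: "'i set set"
  assumes "finite BB" "\<forall>B1\<in>BB. \<forall>B2\<in>BB. B1 \<noteq> B2 \<longrightarrow> B1 \<inter> B2 = {}"
    "\<forall>B\<in>BB. finite B \<and> A B \<in> sets (LB B)"
  shows "BProd BB A \<in> sets (LB (\<Union>BB)) \<and> emeasure (LB (\<Union>BB)) (BProd BB A) = (\<Prod>B\<in>BB. emeasure (LB B) (A B))"
  using assms
proof (induction BB rule: finite_induct)
  case empty
  have "BProd {} A = space (LB {})" by (simp add: Prod_empty space_LB extensional_empty)
  then show ?case by (simp add: PiM_empty)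
next
  case (insert B F)
  have dj: "B \<inter> \<Union>F = {}"
  proof (rule ccontr)
    assume "B \<inter> \<Union>F \<noteq> {}"
    then obtain z B' where "z \<in> B" "B' \<in> F" "z \<in> B'" by blast
    moreover have "B \<noteq> B'" using insert.hyps(2) \<open>B' \<in> F\<close> by blast
    ultimately show False using insert.prems(1) by blast
  qed
  have h1: "\<forall>B1\<in>F. \<forall>B2\<in>F. B1 \<noteq> B2 \<longrightarrow> B1 \<inter> B2 = {}" using insert.prems(1) by blast
  have h2: "\<forall>B\<in>F. finite B \<and> A B \<in> sets (LB B)" using insert.prems(2) by blast
  have IH: "BProd F A \<in> sets (LB (\<Union>F))" "emeasure (LB (\<Union>F)) (BProd F A) = (\<Prod>B\<in>F. emeasure (LB B) (A B))"
    using insert.IH[OF h1 h2] by auto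
  have finU: "finite (\<Union>F)" using insert.hyps(1) h2 by blast
  have AB: "finite B" "A B \<in> sets (LB B)" using insert.prems(2) by auto
  note m2 = meas_two[OF dj AB(1) finU AB(2) IH(1)]
  show ?case
    unfolding Prod_insert using m2 IH(2) insert.hyps by (simp add: prod.insert)
qed

lemma compact_box01: "compact (PiE (UNIV :: nat set) (\<lambda>_. {0..1::real}))"
proof -
  have "compactin (product_topology (\<lambda>_. euclidean) (UNIV :: nat set)) (PiE UNIV (\<lambda>_. {0..1::real}))"
    by (subst compactin_PiE) auto
  then show ?thesis by (simp add: euclidean_product_topology)
qed

lemma conv_measurable:
  fixes I :: "'i set"
  assumes finI: "finite I" and finW: "finite W" and Wext: "W \<subseteq> extensional I"
  shows "conv' I W \<in> sets (LB I)"
proof -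
  obtain b where b: "bij_betw b {0..<card I} I" using ex_bij_betw_nat_finite[OF finI] by blast
  define k where "k = card I"
  obtain ws where ws: "set ws = W" "distinct ws" using finite_distinct_list[OF finW] by blast
  define m where "m = length ws"
  have Wimg: "W = (\<lambda>j. ws ! j) ` {..<m}" using ws unfolding m_def by (auto simp: in_set_conv_nth)
  have conv_eq: "conv' I W = {x. \<exists>c. (\<forall>a. 0 \<le> c a) \<and> (\<Sum>a\<in>{..<m}. c a) = 1 \<and> x = (\<lambda>i\<in>I. \<Sum>a\<in>{..<m}. c a * (ws ! a) i)}"
    unfolding Wimg by (rule conv_image[symmetric]) simp
  define D where "D = {d :: nat \<Rightarrow> real. d \<in> PiE UNIV (\<lambda>_. {0..1})} \<inter> (\<Inter>j\<in>{m..}. {d. d j = 0}) \<inter> {d. (\<Sum>j<m. d j) = 1}"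
  define L where "L d = (\<lambda>j'. if j' < k then (\<Sum>j<m. d j * (ws ! j) (b j')) else 0)" for d :: "nat \<Rightarrow> real"
  define R where "R x = (\<lambda>j'. if j' < k then x (b j') else (0::real))" for x :: "'i \<Rightarrow> real"
  have bk: "b j' \<in> I" if "j' < k" for j' using b that unfolding k_def bij_betw_def by auto
  have cD: "compact D"
  proof -
    have "closed (\<Inter>j\<in>{m..}. {d :: nat \<Rightarrow> real. d j = 0})"
      by (intro closed_INT ballI closed_Collect_eq) (auto intro: continuous_on_const)
    moreover have "closed {d :: nat \<Rightarrow> real. (\<Sum>j<m. d j) = 1}"
      by (intro closed_Collect_eq continuous_on_sum) (auto intro: continuous_on_const)
    ultimately show ?thesis unfolding D_def using compact_box01
      by (intro compact_Int_closed closed_Int) auto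
  qed
  have cL: "continuous_on D L"
    unfolding L_def
  proof (intro continuous_on_coordinatewise_then_product)
    fix i
    have cj: "continuous_on D (\<lambda>x :: nat \<Rightarrow> real. x j)" for j
      by (rule continuous_on_subset[OF continuous_on_product_coordinates]) simp
    show "continuous_on D (\<lambda>x. if i < k then \<Sum>j<m. x j * (ws ! j) (b i) else 0)"
    proof (cases "i < k")
      case True
      then show ?thesis by (simp add: continuous_on_sum continuous_on_mult_right cj)
    next
      case False
      then show ?thesis by (simp add: continuous_on_const)
    qed
  qed
  have closedLD: "closed (L ` D)"
    using compact_continuous_image[OF cL cD] by (rule compact_imp_closed)
  have Rmeas: "R \<in> borel_measurable (LB I)"
  proof (rule measurable_coordinatewise_then_product)
    fix j'
    show "(\<lambda>x. R x j') \<in> borel_measurable (LB I)"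
    proof (cases "j' < k")
      case True
      have "(\<lambda>x. x (b j')) \<in> measurable (LB I) lborel"
        by (rule measurable_component_singleton[OF bk[OF True]])
      then show ?thesis using True by (simp add: R_def)
    next
      case False then show ?thesis by (simp add: R_def)
    qed
  qed
  have key: "conv' I W = R -` (L ` D) \<inter> space (LB I)"
  proof (intro equalityI subsetI)
    fix x assume "x \<in> conv' I W"
    then obtain c where c: "\<forall>a. 0 \<le> c a" "(\<Sum>a\<in>{..<m}. c a) = 1" "x = (\<lambda>i\<in>I. \<Sum>a\<in>{..<m}. c a * (ws ! a) i)"
      unfolding conv_eq by blast
    define d where "d j = (if j < m then c j else 0)" for j
    have "d \<in> D"
    proof -
      have "d j \<le> 1" for j
      proof (cases "j < m")
        case True
        then have "c j \<le> (\<Sum>a\<in>{..<m}. c a)" using c(1) by (intro member_le_sum) auto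
        then show ?thesis using c(2) True by (simp add: d_def)
      qed (simp add: d_def)
      moreover have "(\<Sum>j<m. d j) = 1" using c(2) by (simp add: d_def)
      ultimately show ?thesis unfolding D_def using c(1) by (auto simp: d_def PiE_def)
    qed
    moreover have "R x = L d"
    proof
      fix j' show "R x j' = L d j'"
        using c(3) bk by (auto simp: R_def L_def d_def)
    qed
    moreover have "x \<in> space (LB I)" using c(3) by (simp add: space_LB)
    ultimately show "x \<in> R -` (L ` D) \<inter> space (LB I)" by blast
  next
    fix x assume "x \<in> R -` (L ` D) \<inter> space (LB I)"
    then obtain d where d: "d \<in> D" "R x = L d" and xe: "x \<in> extensional I" by (auto simp: space_LB)
    have "x = (\<lambda>i\<in>I. \<Sum>a\<in>{..<m}. d a * (ws ! a) i)"
    proof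
      fix i show "x i = (\<lambda>i\<in>I. \<Sum>a\<in>{..<m}. d a * (ws ! a) i) i"
      proof (cases "i \<in> I")
        case True
        have "i \<in> b ` {0..<k}" using b True unfolding k_def bij_betw_def by simp
        then obtain j' where j': "j' < k" "b j' = i" by auto
        have "x i = R x j'" using j' by (simp add: R_def)
        also have "\<dots> = L d j'" using d(2) by simp
        finally show ?thesis using j' True by (simp add: L_def)
      next
        case False then show ?thesis using xe by (simp add: extensional_def)
      qed
    qed
    moreover have "\<forall>a. 0 \<le> d a" using d(1) unfolding D_def by (auto simp: PiE_def)
    moreover have "(\<Sum>a\<in>{..<m}. d a) = 1" using d(1) unfolding D_def by auto
    ultimately show "x \<in> conv' I W" unfolding conv_eq by blast
  qed
  show ?thesis unfolding key
    by (rule measurable_sets[OF Rmeas]) (simp add: closedLD borel_closed)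
qed

lemma measurable_reindex:
  fixes \<sigma> :: "'j \<Rightarrow> 'i"
  assumes "\<sigma> \<in> K \<rightarrow> C"
  shows "(\<lambda>x. \<lambda>j\<in>K. x (\<sigma> j)) \<in> measurable (LB C) (LB K)"
proof (rule measurable_restrict)
  fix j assume "j \<in> K"
  then have "\<sigma> j \<in> C" using assms by auto
  then have "(\<lambda>x. x (\<sigma> j)) \<in> measurable (LB C) lborel" by (rule measurable_component_singleton)
  then show "(\<lambda>x. x (\<sigma> j)) \<in> measurable (LB C) lborel" .
qed

lemma distr_reindex:
  fixes \<sigma> :: "'j \<Rightarrow> 'i"
  assumes bij: "bij_betw \<sigma> K C" and finK: "finite K"
  shows "distr (LB C) (LB K) (\<lambda>x. \<lambda>j\<in>K. x (\<sigma> j)) = LB K"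
proof -
  interpret product_sigma_finite "\<lambda>_::'j. lborel :: real measure" by standard
  interpret C: product_sigma_finite "\<lambda>_::'i. lborel :: real measure" by standard
  have finC: "finite C" using bij finK bij_betw_finite by blast
  have sK: "\<sigma> \<in> K \<rightarrow> C" using bij by (auto simp: bij_betw_def)
  define \<tau> where "\<tau> = the_inv_into K \<sigma>"
  have tau: "bij_betw \<tau> C K" unfolding \<tau>_def by (rule bij_betw_the_inv_into[OF bij])
  have tau1: "\<tau> (\<sigma> j) = j" if "j \<in> K" for j
    unfolding \<tau>_def using bij that by (simp add: bij_betw_def the_inv_into_f_f)
  have tau2: "\<sigma> (\<tau> i) = i" if "i \<in> C" for i
    unfolding \<tau>_def using bij that by (simp add: bij_betw_def f_the_inv_into_f)
  show ?thesis
  proof (rule PiM_eqI[OF finK])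
    show "sets (distr (LB C) (LB K) (\<lambda>x. \<lambda>j\<in>K. x (\<sigma> j))) = sets (LB K)" by simp
    fix A :: "'j \<Rightarrow> real set" assume A: "\<And>j. j \<in> K \<Longrightarrow> A j \<in> sets lborel"
    have pre: "(\<lambda>x. \<lambda>j\<in>K. x (\<sigma> j)) -` PiE K A \<inter> space (LB C) = PiE C (\<lambda>i. A (\<tau> i))"
    proof (intro equalityI subsetI)
      fix x assume "x \<in> (\<lambda>x. \<lambda>j\<in>K. x (\<sigma> j)) -` PiE K A \<inter> space (LB C)"
      then have x: "\<forall>j\<in>K. x (\<sigma> j) \<in> A j" "x \<in> extensional C" by (auto simp: space_LB PiE_def Pi_def)
      have "x i \<in> A (\<tau> i)" if "i \<in> C" for i
        using x(1) tau2[OF that] tau that by (metis bij_betwE)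
      then show "x \<in> PiE C (\<lambda>i. A (\<tau> i))" using x(2) by (auto simp: PiE_def)
    next
      fix x assume x: "x \<in> PiE C (\<lambda>i. A (\<tau> i))"
      have "x (\<sigma> j) \<in> A j" if "j \<in> K" for j
        using x sK that tau1[OF that] by (metis PiE_mem funcset_mem)
      then show "x \<in> (\<lambda>x. \<lambda>j\<in>K. x (\<sigma> j)) -` PiE K A \<inter> space (LB C)"
        using x by (auto simp: space_LB PiE_def)
    qed
    have "emeasure (distr (LB C) (LB K) (\<lambda>x. \<lambda>j\<in>K. x (\<sigma> j))) (PiE K A)
          = emeasure (LB C) (PiE C (\<lambda>i. A (\<tau> i)))"
      by (subst emeasure_distr[OF measurable_reindex[OF sK]]) (use A pre in \<open>auto intro!: sets_PiM_I_finite finK\<close>)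
    also have "\<dots> = (\<Prod>i\<in>C. emeasure lborel (A (\<tau> i)))"
      by (rule C.emeasure_PiM[OF finC]) (use A tau in \<open>auto simp: bij_betw_def\<close>)
    also have "\<dots> = (\<Prod>j\<in>K. emeasure lborel (A j))"
      by (rule prod.reindex_bij_betw[OF tau])
    finally show "emeasure (distr (LB C) (LB K) (\<lambda>x. \<lambda>j\<in>K. x (\<sigma> j))) (PiE K A) = (\<Prod>j\<in>K. emeasure lborel (A j))" .
  qed
qed

lemma reindex_inj:
  assumes bij: "bij_betw \<sigma> K C" and x: "x \<in> extensional C" and y: "y \<in> extensional C"
    and eq: "(\<lambda>j\<in>K. x (\<sigma> j)) = (\<lambda>j\<in>K. y (\<sigma> j))"
  shows "x = y"
proof
  fix i show "x i = y i"
  proof (cases "i \<in> C")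
    case True
    then obtain j where "j \<in> K" "\<sigma> j = i" using bij by (auto simp: bij_betw_def)
    then show ?thesis using fun_cong[OF eq, of j] by simp
  next
    case False then show ?thesis using x y by (simp add: extensional_def)
  qed
qed

lemma measure_reindex:
  fixes \<sigma> :: "'j \<Rightarrow> 'i"
  assumes bij: "bij_betw \<sigma> K C" and finK: "finite K"
    and X: "(\<lambda>x. \<lambda>j\<in>K. x (\<sigma> j)) ` A \<in> sets (LB K)" and As: "A \<subseteq> extensional C"
  shows "measure (LB C) A = measure (LB K) ((\<lambda>x. \<lambda>j\<in>K. x (\<sigma> j)) ` A)"
proof -
  let ?\<Phi> = "\<lambda>x. \<lambda>j\<in>K. x (\<sigma> j)"
  have sK: "\<sigma> \<in> K \<rightarrow> C" using bij by (auto simp: bij_betw_def)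
  have pre: "?\<Phi> -` (?\<Phi> ` A) \<inter> space (LB C) = A"
  proof (intro equalityI subsetI)
    fix x assume "x \<in> ?\<Phi> -` (?\<Phi> ` A) \<inter> space (LB C)"
    then obtain a where a: "a \<in> A" "?\<Phi> x = ?\<Phi> a" and xe: "x \<in> extensional C" by (auto simp: space_LB)
    have "x = a" by (rule reindex_inj[OF bij xe _ a(2)]) (use a As in auto)
    then show "x \<in> A" using a by simp
  next
    fix x assume "x \<in> A" then show "x \<in> ?\<Phi> -` (?\<Phi> ` A) \<inter> space (LB C)" using As by (auto simp: space_LB)
  qed
  have "measure (LB K) (?\<Phi> ` A) = measure (distr (LB C) (LB K) ?\<Phi>) (?\<Phi> ` A)"
    using distr_reindex[OF bij finK] by simp
  also have "\<dots> = measure (LB C) A"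
    by (subst measure_distr[OF measurable_reindex[OF sK] X]) (simp add: pre)
  finally show ?thesis by simp
qed

lemma conv_reindex:
  assumes finW: "finite W" and sK: "\<sigma> \<in> K \<rightarrow> C"
  shows "(\<lambda>x. \<lambda>j\<in>K. x (\<sigma> j)) ` conv' C W = conv' K ((\<lambda>x. \<lambda>j\<in>K. x (\<sigma> j)) ` W)"
proof -
  let ?\<Phi> = "\<lambda>x. \<lambda>j\<in>K. x (\<sigma> j)"
  have eq: "conv' K (?\<Phi> ` W) = {x. \<exists>c. (\<forall>a. 0 \<le> c a) \<and> (\<Sum>a\<in>W. c a) = 1 \<and> x = (\<lambda>i\<in>K. \<Sum>a\<in>W. c a * ?\<Phi> a i)}"
    by (rule conv_image[OF finW, symmetric])
  have img: "?\<Phi> (\<lambda>i\<in>C. \<Sum>w\<in>W. c w * w i) = (\<lambda>j\<in>K. \<Sum>w\<in>W. c w * ?\<Phi> w j)" for c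
  proof
    fix j show "?\<Phi> (\<lambda>i\<in>C. \<Sum>w\<in>W. c w * w i) j = (\<lambda>j\<in>K. \<Sum>w\<in>W. c w * ?\<Phi> w j) j"
      using sK by (cases "j \<in> K") auto
  qed
  show ?thesis
  proof (intro equalityI subsetI)
    fix y assume "y \<in> ?\<Phi> ` conv' C W"
    then obtain c where c: "\<forall>w. 0 \<le> c w" "(\<Sum>w\<in>W. c w) = 1" "y = ?\<Phi> (\<lambda>i\<in>C. \<Sum>w\<in>W. c w * w i)"
      unfolding conv'_def by blast
    show "y \<in> conv' K (?\<Phi> ` W)" unfolding eq using c img by blast
  next
    fix y assume "y \<in> conv' K (?\<Phi> ` W)"
    then obtain c where c: "\<forall>w. 0 \<le> c w" "(\<Sum>w\<in>W. c w) = 1" "y = (\<lambda>i\<in>K. \<Sum>a\<in>W. c a * ?\<Phi> a i)"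
      unfolding eq by blast
    have "(\<lambda>i\<in>C. \<Sum>w\<in>W. c w * w i) \<in> conv' C W" unfolding conv'_def using c(1,2) by blast
    moreover have "y = ?\<Phi> (\<lambda>i\<in>C. \<Sum>w\<in>W. c w * w i)" using c(3) img by simp
    ultimately show "y \<in> ?\<Phi> ` conv' C W" by blast
  qed
qed

definition Wcyc :: "nat set set \<Rightarrow> (nat set \<Rightarrow> real) set" where
  "Wcyc X = {y \<in> extensional X. (\<forall>e\<in>X. y e = 0 \<or> y e = 1) \<and> even (card {e\<in>X. y e = 1})}"

lemma Wcyc_finite:
  assumes "finite X" shows "finite (Wcyc X)"
proof -
  have "Wcyc X \<subseteq> PiE X (\<lambda>_. {0,1})" by (auto simp: Wcyc_def PiE_def Pi_def)
  moreover have "finite (PiE X (\<lambda>_. {0::real,1}))" using assms by (intro finite_PiE) auto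
  ultimately show ?thesis by (rule finite_subset)
qed

lemma Wcyc_ext: "Wcyc X \<subseteq> extensional X"
  by (auto simp: Wcyc_def)

lemma Wcyc_reindex:
  assumes bij: "bij_betw \<sigma> K C"
  shows "(\<lambda>x. \<lambda>j\<in>K. x (\<sigma> j)) ` Wcyc C = Wcyc K"
proof (intro equalityI subsetI)
  fix y assume "y \<in> (\<lambda>x. \<lambda>j\<in>K. x (\<sigma> j)) ` Wcyc C"
  then obtain w where w: "w \<in> Wcyc C" "y = (\<lambda>j\<in>K. w (\<sigma> j))" by blast
  have sK: "\<sigma> j \<in> C" if "j \<in> K" for j using bij that by (auto simp: bij_betw_def)
  have "{e \<in> C. w e = 1} = \<sigma> ` {j \<in> K. w (\<sigma> j) = 1}" using bij by (auto simp: bij_betw_def)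
  moreover have "inj_on \<sigma> {j \<in> K. w (\<sigma> j) = 1}" using bij by (auto simp: bij_betw_def intro: inj_on_subset)
  moreover have "{j \<in> K. y j = 1} = {j \<in> K. w (\<sigma> j) = 1}" using w(2) by auto
  ultimately have "card {e \<in> C. w e = 1} = card {j \<in> K. y j = 1}"
    by (simp add: card_image)
  then show "y \<in> Wcyc K" using w sK by (auto simp: Wcyc_def)
next
  fix y assume y: "y \<in> Wcyc K"
  define \<tau> where "\<tau> = the_inv_into K \<sigma>"
  have tau: "bij_betw \<tau> C K" unfolding \<tau>_def by (rule bij_betw_the_inv_into[OF bij])
  have tau1: "\<tau> (\<sigma> j) = j" if "j \<in> K" for j
    unfolding \<tau>_def using bij that by (simp add: bij_betw_def the_inv_into_f_f)
  define w where "w = (\<lambda>i\<in>C. y (\<tau> i))"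
  have sK: "\<sigma> j \<in> C" if "j \<in> K" for j using bij that by (auto simp: bij_betw_def)
  have tK: "\<tau> i \<in> K" if "i \<in> C" for i using tau that by (auto simp: bij_betw_def)
  have "y = (\<lambda>j\<in>K. w (\<sigma> j))"
  proof
    fix j show "y j = (\<lambda>j\<in>K. w (\<sigma> j)) j"
      using y tau1 sK by (cases "j \<in> K") (auto simp: w_def Wcyc_def extensional_def)
  qed
  moreover have "w \<in> Wcyc C"
  proof -
    have "{j \<in> K. y j = 1} = \<tau> ` {i \<in> C. w i = 1}" using tau by (auto simp: bij_betw_def w_def)
    moreover have "inj_on \<tau> {i \<in> C. w i = 1}" using tau by (auto simp: bij_betw_def intro: inj_on_subset)
    ultimately have "card {j \<in> K. y j = 1} = card {i \<in> C. w i = 1}" by (simp add: card_image)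
    then show ?thesis using y tK by (auto simp: Wcyc_def w_def)
  qed
  ultimately show "y \<in> (\<lambda>x. \<lambda>j\<in>K. x (\<sigma> j)) ` Wcyc C" by blast
qed

lemma cut_polytope_conv: "cut_polytope n E = conv' E (cut_vec E ` Pow {1..n-1})"
  unfolding cut_polytope_def by (rule conv_image) simp

lemma ce_upt: "i < k \<Longrightarrow> ce [1..<k+1] i = {i + 1, (i + 1) mod k + 1}"
proof -
  assume i: "i < k"
  have "[1..<k+1] ! i = i + 1" using i by (simp add: nth_upt del: upt_Suc)
  moreover have "[1..<k+1] ! ((i+1) mod length [1..<k+1]) = (i+1) mod k + 1"
    using i by (simp add: nth_upt del: upt_Suc)
  ultimately show ?thesis unfolding ce_def by simp
qed

lemma cycle_graph_eq:
  assumes "3 \<le> k"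
  shows "cycle_graph k = cycle_of [1..<k+1]"
proof -
  have co: "cycle_of [1..<k+1] = ce [1..<k+1] ` {..<k}" using cycle_of_ce[of "[1..<k+1]"] by (simp del: upt_Suc)
  show ?thesis
  proof (intro equalityI subsetI)
    fix e assume "e \<in> cycle_graph k"
    then consider (a) i where "e = {i, i+1}" "1 \<le> i" "i < k" | (b) "e = {k, 1}"
      unfolding cycle_graph_def by auto
    then show "e \<in> cycle_of [1..<k+1]"
    proof cases
      case (a i)
      have "ce [1..<k+1] (i - 1) = {i - 1 + 1, (i - 1 + 1) mod k + 1}" using a by (intro ce_upt) simp
      then have "ce [1..<k+1] (i - 1) = e" using a by (simp del: upt_Suc)
      then show ?thesis unfolding co using a by (intro image_eqI[of e _ "i - 1"]) auto
    next
      case b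
      have "ce [1..<k+1] (k - 1) = {k - 1 + 1, (k - 1 + 1) mod k + 1}" using assms by (intro ce_upt) simp
      then have "ce [1..<k+1] (k - 1) = e" using assms b by (simp del: upt_Suc)
      then show ?thesis unfolding co using assms by (intro image_eqI[of e _ "k - 1"]) auto
    qed
  next
    fix e assume "e \<in> cycle_of [1..<k+1]"
    then obtain i where i: "i < k" "e = ce [1..<k+1] i" unfolding co by auto
    show "e \<in> cycle_graph k"
    proof (cases "i + 1 < k")
      case True
      then have "e = {i+1, i+1+1}" using ce_upt[OF i(1)] i(2) by (simp del: upt_Suc)
      then show ?thesis unfolding cycle_graph_def using True by (intro UnI1 CollectI exI[of _ "i+1"]) auto
    next
      case False
      then have "i = k - 1" using i by simp
      then have "e = {k, 1}" using ce_upt[OF i(1)] i(2) assms by (simp del: upt_Suc)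
      then show ?thesis unfolding cycle_graph_def by simp
    qed
  qed
qed

lemma cycle_cuts:
  assumes k3: "3 \<le> k"
  shows "cut_vec (cycle_graph k) ` Pow {1..k-1} = Wcyc (cycle_graph k)"
proof -
  let ?K = "cycle_graph k"
  let ?vs = "[1..<k+1]"
  have KC: "?K = cycle_of ?vs" by (rule cycle_graph_eq[OF k3])
  have dist: "distinct ?vs" by simp
  have len: "length ?vs = k" by simp
  have cyc: "is_cycle ?K ?K" unfolding is_cycle_def using KC dist len k3 by (intro exI[of _ ?vs]) simp
  show ?thesis
  proof (intro equalityI subsetI)
    fix x assume "x \<in> cut_vec ?K ` Pow {1..k-1}"
    then obtain S where x: "x = cut_vec ?K S" by blast
    show "x \<in> Wcyc ?K"
      unfolding Wcyc_def x using cut_vec_cycle_even[OF cyc, of S] by (auto simp: cut_vec_def)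
  next
    fix y assume y: "y \<in> Wcyc ?K"
    define g where "g = ce ?vs"
    have Kg: "?K = g ` {..<k}" unfolding g_def KC using cycle_of_ce[of ?vs] len by (simp del: upt_Suc)
    have ginj: "inj_on g {..<k}" unfolding g_def using ce_inj[OF dist] len k3 by (simp del: upt_Suc)
    have gi: "g i = {i+1, (i+1) mod k + 1}" if "i < k" for i unfolding g_def by (rule ce_upt[OF that])
    define a where "a i = (y (g i) = 1)" for i
    have tot: "even (card {i. i < k \<and> a i})"
    proof -
      have "{e \<in> ?K. y e = 1} = g ` {i. i < k \<and> a i}" unfolding Kg a_def by auto
      moreover have "inj_on g {i. i < k \<and> a i}" by (rule inj_on_subset[OF ginj]) auto
      ultimately have "card {e \<in> ?K. y e = 1} = card {i. i < k \<and> a i}" by (simp add: card_image)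
      then show ?thesis using y by (simp add: Wcyc_def)
    qed
    define N where "N j = card {i. j \<le> i \<and> i < k - 1 \<and> a i}" for j
    have Nrec: "N j = N (Suc j) + (if a j then 1 else 0)" if "j < k - 1" for j
    proof -
      have "{i. j \<le> i \<and> i < k - 1 \<and> a i} = (if a j then insert j {i. Suc j \<le> i \<and> i < k - 1 \<and> a i} else {i. Suc j \<le> i \<and> i < k - 1 \<and> a i})"
        using that by (auto simp: Suc_le_eq le_less)
      then show ?thesis unfolding N_def by (simp add: card_insert_if)
    qed
    have Nend: "N (k - 1) = 0" unfolding N_def by simp
    have N0: "card {i. i < k \<and> a i} = N 0 + (if a (k - 1) then 1 else 0)"
    proof -
      have "{i. i < k \<and> a i} = (if a (k - 1) then insert (k - 1) {i. 0 \<le> i \<and> i < k - 1 \<and> a i} else {i. 0 \<le> i \<and> i < k - 1 \<and> a i})"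
      proof -
        obtain k' where k': "k = Suc k'" using k3 by (cases k) auto
        show ?thesis unfolding k' by (auto simp: less_Suc_eq)
      qed
      then show ?thesis unfolding N_def by (simp add: card_insert_if)
    qed
    define S where "S = (\<lambda>j. j + 1) ` {j. j < k - 1 \<and> odd (N j)}"
    have mS: "j + 1 \<in> S \<longleftrightarrow> j < k - 1 \<and> odd (N j)" for j unfolding S_def by auto
    have SP: "S \<in> Pow {1..k-1}" unfolding S_def by auto
    have edge: "card (g i \<inter> S) = 1 \<longleftrightarrow> a i" if i: "i < k" for i
    proof (cases "i + 1 < k")
      case True
      then have ge: "g i = {i+1, i+1+1}" using gi[OF i] by simp
      have ik1: "i < k - 1" using True by linarith
      have s1: "i + 1 \<in> S \<longleftrightarrow> odd (N i)" using mS[of i] ik1 by simp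
      have s2: "i + 1 + 1 \<in> S \<longleftrightarrow> odd (N (i + 1))"
      proof (cases "i + 1 < k - 1")
        case True then show ?thesis using mS[of "i+1"] by simp
      next
        case False
        then have "i + 1 = k - 1" using \<open>i + 1 < k\<close> by simp
        then show ?thesis using mS[of "i+1"] Nend by simp
      qed
      have "N i = N (i + 1) + (if a i then 1 else 0)" using Nrec[OF ik1] by simp
      then show ?thesis unfolding ge using card_doubleton_int[of "i+1" "i+1+1" S] s1 s2 by auto
    next
      case False
      then have ik: "i = k - 1" using i by simp
      then have ge: "g i = {k, 1}" using gi[OF i] k3 by simp
      have s1: "k \<notin> S" using mS[of "k - 1"] k3 by simp
      have s2: "1 \<in> S \<longleftrightarrow> odd (N 0)" using mS[of 0] k3 by simp
      have "card (g i \<inter> S) = 1 \<longleftrightarrow> odd (N 0)"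
        unfolding ge using card_doubleton_int[of k 1 S] s1 s2 k3 by auto
      also have "\<dots> \<longleftrightarrow> a i" using tot N0 ik by auto
      finally show ?thesis .
    qed
    have "cut_vec ?K S = y"
    proof
      fix e show "cut_vec ?K S e = y e"
      proof (cases "e \<in> ?K")
        case True
        then obtain i where i: "i < k" "e = g i" unfolding Kg by auto
        have "y e = 0 \<or> y e = 1" using y True by (auto simp: Wcyc_def)
        then show ?thesis using edge[OF i(1)] True i(2) by (auto simp: cut_vec_def a_def)
      next
        case False then show ?thesis using y by (auto simp: cut_vec_def Wcyc_def extensional_def)
      qed
    qed
    then show "y \<in> cut_vec ?K ` Pow {1..k-1}" using SP by blast
  qed
qed

lemma bij_ce:
  assumes "distinct vs" "3 \<le> length vs"
  shows "bij_betw (ce vs) {..<length vs} (cycle_of vs)"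
  unfolding bij_betw_def using ce_inj[OF assms] cycle_of_ce[of vs] by simp

lemma cycle_vol:
  assumes dist: "distinct vs" and L3: "3 \<le> length vs"
  shows "measure (LB (cycle_of vs)) (conv' (cycle_of vs) (Wcyc (cycle_of vs))) = cut_vol (length vs) (cycle_graph (length vs))"
proof -
  define k where "k = length vs"
  let ?K = "cycle_graph k"
  let ?C = "cycle_of vs"
  have k3: "3 \<le> k" using L3 by (simp add: k_def)
  have gb: "bij_betw (ce [1..<k+1]) {..<k} ?K"
    using bij_ce[of "[1..<k+1]"] k3 cycle_graph_eq[OF k3] by (simp del: upt_Suc)
  have hb: "bij_betw (ce vs) {..<k} ?C" using bij_ce[OF dist L3] by (simp add: k_def)
  define \<sigma> where "\<sigma> = ce vs \<circ> inv_into {..<k} (ce [1..<k+1])"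
  have sb: "bij_betw \<sigma> ?K ?C" unfolding \<sigma>_def by (rule bij_betw_trans[OF bij_betw_inv_into[OF gb] hb])
  have finK: "finite ?K" using gb bij_betw_finite by blast
  have finC: "finite ?C" using hb bij_betw_finite by blast
  have sK: "\<sigma> \<in> ?K \<rightarrow> ?C" using sb by (auto simp: bij_betw_def)
  let ?\<Phi> = "\<lambda>x. \<lambda>j\<in>?K. x (\<sigma> j)"
  have img: "?\<Phi> ` conv' ?C (Wcyc ?C) = conv' ?K (Wcyc ?K)"
    using conv_reindex[OF Wcyc_finite[OF finC] sK] Wcyc_reindex[OF sb] by simp
  have "cut_vol k ?K = measure (LB ?K) (conv' ?K (Wcyc ?K))"
    unfolding cut_vol_def cut_polytope_conv cycle_cuts[OF k3] ..
  also have "\<dots> = measure (LB ?C) (conv' ?C (Wcyc ?C))"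
    unfolding img[symmetric]
    by (rule measure_reindex[OF sb finK, symmetric])
       (use img conv_measurable[OF finK Wcyc_finite[OF finK] Wcyc_ext] conv_ext in auto)
  finally show ?thesis by (simp add: k_def)
qed

lemma enn2real_prod: "finite A \<Longrightarrow> enn2real (\<Prod>a\<in>A. f a) = (\<Prod>a\<in>A. enn2real (f a))"
  by (induction A rule: finite_induct) (simp_all add: enn2real_mult)

lemma bridge_vol:
  fixes e :: "'i"
  defines "W1 \<equiv> {y \<in> extensional {e}. \<forall>f\<in>{e}. y f = (0::real) \<or> y f = 1}"
  shows "measure (LB {e}) (conv' {e} W1) = 1"
proof -
  define w0 where "w0 = (\<lambda>i\<in>{e}. (0::real))"
  define w1 where "w1 = (\<lambda>i\<in>{e}. (1::real))"
  have ne: "w0 \<noteq> w1" unfolding w0_def w1_def by (metis restrict_apply' singletonI zero_neq_one)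
  have W1eq: "W1 = {w0, w1}"
  proof (intro equalityI subsetI)
    fix y assume "y \<in> W1"
    then have "y \<in> extensional {e}" "y e = 0 \<or> y e = 1" unfolding W1_def by auto
    then show "y \<in> {w0, w1}" unfolding w0_def w1_def by (auto simp: fun_eq_iff extensional_def)
  next
    fix y assume "y \<in> {w0, w1}" then show "y \<in> W1" unfolding W1_def w0_def w1_def by auto
  qed
  have eq: "conv' {e} W1 = PiE {e} (\<lambda>_. {0..1})"
  proof (intro equalityI subsetI)
    fix x assume "x \<in> conv' {e} W1"
    then obtain c where c: "\<forall>w. 0 \<le> c w" "(\<Sum>w\<in>W1. c w) = 1" "x = (\<lambda>i\<in>{e}. \<Sum>w\<in>W1. c w * w i)"
      unfolding conv'_def by blast
    have "x e = c w0 * 0 + c w1 * 1" using c(3) ne unfolding W1eq by (simp add: w0_def w1_def)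
    moreover have "c w0 + c w1 = 1" using c(2) ne unfolding W1eq by simp
    moreover have "0 \<le> c w0" "0 \<le> c w1" using c(1) by auto
    ultimately have "0 \<le> x e" "x e \<le> 1" by linarith+
    then show "x \<in> PiE {e} (\<lambda>_. {0..1})" using c(3) by (auto simp: PiE_def)
  next
    fix x :: "'i \<Rightarrow> real" assume x: "x \<in> PiE {e} (\<lambda>_. {0..1})"
    define t where "t = x e"
    have t: "0 \<le> t" "t \<le> 1" using x by (auto simp: t_def)
    define c where "c w = (if w = w1 then t else if w = w0 then 1 - t else 0)" for w
    have "\<forall>w. 0 \<le> c w" using t by (simp add: c_def)
    moreover have "(\<Sum>w\<in>W1. c w) = 1" unfolding W1eq using ne by (simp add: c_def)
    moreover have "x = (\<lambda>i\<in>{e}. \<Sum>w\<in>W1. c w * w i)"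
    proof
      fix i show "x i = (\<lambda>i\<in>{e}. \<Sum>w\<in>W1. c w * w i) i"
        using x ne unfolding W1eq by (cases "i = e") (auto simp: c_def w0_def w1_def t_def PiE_def extensional_def)
    qed
    ultimately show "x \<in> conv' {e} W1" unfolding conv'_def by blast
  qed
  interpret product_sigma_finite "\<lambda>_::'i. lborel :: real measure" by standard
  have "emeasure (LB {e}) (PiE {e} (\<lambda>_. {0..1})) = (\<Prod>i\<in>{e}. emeasure lborel {0..1::real})"
    by (rule emeasure_PiM) auto
  then show ?thesis unfolding eq measure_def by simp
qed

theorem proposition6:
  fixes n :: nat and E :: "nat set set"
  assumes "cactus n E"
    and "cycles E \<noteq> {}"
  shows "cut_vol n E = (\<Prod>C\<in>cycles E. cut_vol (card C) (cycle_graph (card C)))"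
proof -
  have eok: "edges_ok n E" and uniq: "\<And>e C1 C2. e \<in> E \<Longrightarrow> is_cycle E C1 \<Longrightarrow> is_cycle E C2 \<Longrightarrow> e \<in> C1 \<Longrightarrow> e \<in> C2 \<Longrightarrow> C1 = C2"
    using assms(1) unfolding cactus_def simple_graph_def edges_ok_def by blast+
  have finE: "finite E"
  proof (rule finite_subset[of E "Pow {1..n}"])
    show "E \<subseteq> Pow {1..n}" using eok unfolding edges_ok_def by auto
  qed simp
  let ?Cy = "cycles E"
  have cyE: "C \<subseteq> E" if "C \<in> ?Cy" for C using that unfolding cycles_def is_cycle_def by auto
  have finCy: "finite ?Cy" by (rule finite_subset[of _ "Pow E"]) (use cyE finE in auto)
  define Br where "Br = {e \<in> E. \<forall>C\<in>?Cy. e \<notin> C}"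
  define BB where "BB = ?Cy \<union> (\<lambda>e. {e}) ` Br"
  define W where "W B = {y \<in> (extensional B :: (nat set \<Rightarrow> real) set). (\<forall>e\<in>B. y e = 0 \<or> y e = 1) \<and> (B \<in> ?Cy \<longrightarrow> even (card {e\<in>B. y e = 1}))}" for B
  have finBB: "finite BB" unfolding BB_def Br_def using finCy finE by simp
  have dj: "\<forall>B1\<in>BB. \<forall>B2\<in>BB. B1 \<noteq> B2 \<longrightarrow> B1 \<inter> B2 = {}"
  proof (intro ballI impI)
    fix B1 B2 assume B: "B1 \<in> BB" "B2 \<in> BB" "B1 \<noteq> B2"
    show "B1 \<inter> B2 = {}"
    proof (rule ccontr)
      assume "B1 \<inter> B2 \<noteq> {}"
      then obtain e where e: "e \<in> B1" "e \<in> B2" by blast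
      show False
      proof (cases "B1 \<in> ?Cy")
        case c1: True
        show False
        proof (cases "B2 \<in> ?Cy")
          case True
          then show False using uniq[of e B1 B2] c1 e B(3) cyE by (auto simp: cycles_def)
        next
          case False
          then have "B2 = {e}" "e \<in> Br" using B(2) e(2) unfolding BB_def by auto
          then show False using c1 e(1) unfolding Br_def by auto
        qed
      next
        case c1: False
        then have b1: "B1 = {e}" "e \<in> Br" using B(1) e(1) unfolding BB_def by auto
        show False
        proof (cases "B2 \<in> ?Cy")
          case True
          then show False using b1 e(2) unfolding Br_def by auto
        next
          case False
          then have "B2 = {e}" using B(2) e(2) unfolding BB_def by auto
          then show False using b1 B(3) by simp
        qed
      qed
    qed
  qed
  have UBB: "\<Union>BB = E" unfolding BB_def Br_def using cyE by blast
  have finB: "finite B" if "B \<in> BB" for B using that UBB finE by (meson Sup_upper finite_subset)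
  have finW: "finite (W B) \<and> W B \<subseteq> extensional B" if "B \<in> BB" for B
  proof
    have "W B \<subseteq> PiE B (\<lambda>_. {0,1})" unfolding W_def by (auto simp: PiE_def Pi_def)
    moreover have "finite (PiE B (\<lambda>_. {0::real,1}))" using finB[OF that] by (intro finite_PiE) auto
    ultimately show "finite (W B)" using finite_subset by blast
    show "W B \<subseteq> extensional B" unfolding W_def by auto
  qed
  have cuts: "cut_vec E ` Pow {1..n-1} = BProd BB W"
  proof (intro equalityI subsetI)
    fix x assume "x \<in> cut_vec E ` Pow {1..n-1}"
    then obtain S where x: "x = cut_vec E S" by blast
    have "restrict x B \<in> W B" if "B \<in> BB" for B
    proof -
      have BE: "B \<subseteq> E" using that UBB by blast
      have "even (card {e \<in> B. restrict x B e = 1})" if "B \<in> ?Cy"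
      proof -
        have "{e \<in> B. restrict x B e = 1} = {e \<in> B. cut_vec E S e = 1}" using x by auto
        then show ?thesis using cut_vec_cycle_even[of E B S] that by (simp add: cycles_def)
      qed
      then show ?thesis unfolding W_def using BE x by (auto simp: cut_vec_def)
    qed
    moreover have "x \<in> extensional (\<Union>BB)" unfolding UBB x by (simp add: cut_vec_def)
    ultimately show "x \<in> BProd BB W" unfolding BProd_def by blast
  next
    fix x assume x: "x \<in> BProd BB W"
    then have xe: "x \<in> extensional E" and xB: "\<And>B. B \<in> BB \<Longrightarrow> restrict x B \<in> W B"
      unfolding BProd_def UBB by auto
    have v: "\<forall>e\<in>E. x e = 0 \<or> x e = 1"
    proof
      fix e assume "e \<in> E"
      then obtain B where B: "B \<in> BB" "e \<in> B" using UBB by blast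
      then show "x e = 0 \<or> x e = 1" using xB[OF B(1)] unfolding W_def by auto
    qed
    have c: "\<forall>C. is_cycle E C \<longrightarrow> even (card {e\<in>C. x e = 1})"
    proof (intro allI impI)
      fix C assume C: "is_cycle E C"
      then have "C \<in> BB" "C \<in> ?Cy" unfolding BB_def cycles_def by auto
      then have "even (card {e \<in> C. restrict x C e = 1})" using xB unfolding W_def by blast
      moreover have "{e \<in> C. restrict x C e = 1} = {e \<in> C. x e = 1}" by auto
      ultimately show "even (card {e\<in>C. x e = 1})" by simp
    qed
    obtain S where "S \<subseteq> {1..n-1}" "cut_vec E S = x" using cut_exists[OF finE eok xe v c] by blast
    then show "x \<in> cut_vec E ` Pow {1..n-1}" by blast
  qed
  have cf: "conv' E (BProd BB W) = BProd BB (\<lambda>B. conv' B (W B))"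
    using conv_family[OF finBB dj] finW UBB by auto
  have mf: "emeasure (LB E) (BProd BB (\<lambda>B. conv' B (W B))) = (\<Prod>B\<in>BB. emeasure (LB B) (conv' B (W B)))"
  proof -
    have ms: "\<forall>B\<in>BB. finite B \<and> conv' B (W B) \<in> sets (LB B)"
    proof
      fix B assume "B \<in> BB"
      have fB: "finite B" using finB[OF \<open>B \<in> BB\<close>] .
      have fW: "finite (W B)" "W B \<subseteq> extensional B" using finW[OF \<open>B \<in> BB\<close>] by auto
      show "finite B \<and> conv' B (W B) \<in> sets (LB B)"
        using fB conv_measurable[OF fB fW] by simp
    qed
    have "emeasure (LB (\<Union>BB)) (BProd BB (\<lambda>B. conv' B (W B))) = (\<Prod>B\<in>BB. emeasure (LB B) (conv' B (W B)))"
      using meas_family[OF finBB dj ms] by (rule conjunct2)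
    then show ?thesis unfolding UBB .
  qed
  have "cut_vol n E = (\<Prod>B\<in>BB. measure (LB B) (conv' B (W B)))"
    unfolding cut_vol_def cut_polytope_conv cuts cf measure_def mf
    by (rule enn2real_prod[OF finBB])
  also have "\<dots> = (\<Prod>B\<in>?Cy. measure (LB B) (conv' B (W B))) * (\<Prod>B\<in>(\<lambda>e. {e}) ` Br. measure (LB B) (conv' B (W B)))"
    unfolding BB_def
  proof (rule prod.union_disjoint)
    show "finite ?Cy" by (rule finCy)
    show "finite ((\<lambda>e. {e}) ` Br)" unfolding Br_def using finE by simp
    show "?Cy \<inter> (\<lambda>e. {e}) ` Br = {}" unfolding Br_def by auto
  qed
  also have "(\<Prod>B\<in>(\<lambda>e. {e}) ` Br. measure (LB B) (conv' B (W B))) = 1"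
  proof (rule prod.neutral, rule ballI)
    fix B assume "B \<in> (\<lambda>e. {e}) ` Br"
    then obtain e where e: "B = {e}" "e \<in> Br" by blast
    then have "B \<notin> ?Cy" unfolding Br_def by auto
    then have "W B = {y \<in> extensional {e}. \<forall>f\<in>{e}. y f = (0::real) \<or> y f = 1}" unfolding W_def e(1) by auto
    then show "measure (LB B) (conv' B (W B)) = 1" using bridge_vol[of e] e(1) by simp
  qed
  also have "(\<Prod>B\<in>?Cy. measure (LB B) (conv' B (W B))) = (\<Prod>C\<in>?Cy. cut_vol (card C) (cycle_graph (card C)))"
  proof (rule prod.cong[OF refl])
    fix C assume C: "C \<in> ?Cy"
    then obtain vs where vs: "3 \<le> length vs" "distinct vs" "C = cycle_of vs"
      unfolding cycles_def is_cycle_def by auto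
    have "W C = Wcyc C" unfolding W_def Wcyc_def using C by auto
    moreover have "card C = length vs" using bij_ce[OF vs(2,1)] vs(3) by (simp add: bij_betw_same_card[symmetric])
    ultimately show "measure (LB C) (conv' C (W C)) = cut_vol (card C) (cycle_graph (card C))"
      using cycle_vol[OF vs(2,1)] vs(3) by simp
  qed
  finally show ?thesis by simp
qed

end
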